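(* The set $\mathrm{Ord}$ is not reduced to a point. More precisely: (i) for all $\alpha,\beta\in\mathrm{Ord}$, $\beta\le\alpha$ and $\alpha<\beta$ cannot both hold; (ii) for $m,n\in\mathbb N$, $m<n$ iff $\underline m<\underline n$, so the map $n\mapsto\underline n:\mathbb N\to\mathrm{Ord}$ is injective; (iii) for all $\alpha\in\mathrm{Ord}$ and $n>m$ in $\mathbb N$, it is impossible that $\mathrm{succ}^{(n)}(\alpha)=_{\mathrm{Ord}}\mathrm{succ}^{(m)}(\alpha)$.
   Context: Work constructively. Let $\mathfrak F$ be a set of index sets containing $\mathbb N$ and each $\mathbb N_k=\{n\in\mathbb N:n<k\}$ ($k\ge0$), closed (up to isomorphism) under finitely enumerated subsets, sets of finitely enumerated subsets, and disjoint unions indexed by elements of $\mathfrak F$. A finitely enumerated subset of $A$ is one given by a map $\mathbb N_k\to A$; write $F\subseteq_f I$. The set $\mathrm{ord}$ is inductively generated by $\underline 0$ and, for every family $(\alpha_i)_{i\in I}$ with $I\in\mathfrak F$, $\alpha_i\in\mathrm{ord}$, an element $\mathrm S(\alpha_i)_{i\in I}$; for such $\alpha$, $I_\alpha=I$ and $\alpha_i$ are its definitional subordinals; $I_{\underline 0}=\emptyset$. $\mathrm{succ}(\alpha)$ is $\mathrm S$ of the one-element family $(\alpha)$; $\mathrm{succ}^{(n)}$ is its $n$-fold iterate; $\underline{m+1}=\mathrm{succ}(\underline m)$. For a finite list $F$ in $I_\alpha$, $\alpha_F$ is the list of the $\alpha_i$, $i\in F$. Relations between an element and a nonempty finite list,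 by simultaneous induction: $\alpha\le\beta^1,\dots,\beta^m$ means $\alpha_i<\beta^1,\dots,\beta^m$ for all $i\in I_\alpha$; $\alpha<\beta^1,\dots,\beta^m$ means there exist $F_1\subseteq_f I_{\beta^1},\dots,F_m\subseteq_f I_{\beta^m}$, not all empty, with $\alpha\le\beta^1_{F_1},\dots,\beta^m_{F_m}$ (concatenated list); $\alpha\le\beta$, $\alpha<\beta$ are the case $m=1$. $\alpha=_{\mathrm{Ord}}\beta$ means $\alpha\le\beta$ and $\beta\le\alpha$; this is an equivalence relation compatible with $\le,<,\mathrm{succ}$, and $\mathrm{Ord}$ is the quotient with the induced relations and map. *)

theory Defs
  imports Main
begin

text \<open>Pre-ordinals over an index type 'i: the tree 0 or S I f, where the family
  is f restricted to the index set I.\<close>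

datatype 'i pord = OZero | OS "'i set" "'i \<Rightarrow> 'i pord"

fun idx :: "'i pord \<Rightarrow> 'i set" where
  "idx OZero = {}"
| "idx (OS I f) = I"

fun sub :: "'i pord \<Rightarrow> 'i \<Rightarrow> 'i pord" where
  "sub OZero i = OZero"
| "sub (OS I f) i = f i"

text \<open>Given the relation "gamma \<le> list" for a fixed gamma (argument L), the relation
  "gamma < beta^1,...,beta^m": there are finitely enumerated subsets F_j of I_{beta^j},
  not all empty, with gamma \<le> the concatenated list of the beta^j_{F_j}.\<close>

definition lt_via :: "('i pord list \<Rightarrow> bool) \<Rightarrow> 'i pord list \<Rightarrow> bool" where
  "lt_via L bs = (\<exists>Fs :: 'i list list. length Fs = length bs
      \<and> (\<forall>j<length bs. set (Fs ! j) \<subseteq> idx (bs ! j))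
      \<and> (\<exists>j<length bs. Fs ! j \<noteq> [])
      \<and> L (concat (map2 (\<lambda>b F. map (sub b) F) bs Fs)))"

primrec ord_le :: "'i pord \<Rightarrow> 'i pord list \<Rightarrow> bool" where
  "ord_le OZero bs = True"
| "ord_le (OS I f) bs = (\<forall>i\<in>I. lt_via (ord_le (f i)) bs)"

definition ord_lt :: "'i pord \<Rightarrow> 'i pord list \<Rightarrow> bool" where
  "ord_lt a bs = lt_via (ord_le a) bs"

definition ord_eq :: "'i pord \<Rightarrow> 'i pord \<Rightarrow> bool" where
  "ord_eq a b = (ord_le a [b] \<and> ord_le b [a])"

inductive in_ord :: "'i set set \<Rightarrow> 'i pord \<Rightarrow> bool" for FF where
  "in_ord FF OZero"
| "I \<in> FF \<Longrightarrow> (\<And>i. i \<in> I \<Longrightarrow> in_ord FF (f i)) \<Longrightarrow> in_ord FF (OS I f)"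

definition osucc :: "'i pord \<Rightarrow> 'i pord" where
  "osucc a = OS {undefined} (\<lambda>_. a)"

primrec onum :: "nat \<Rightarrow> 'i pord" where
  "onum 0 = OZero"
| "onum (Suc m) = osucc (onum m)"

definition index_family :: "'i set set \<Rightarrow> bool" where
  "index_family FF \<longleftrightarrow>
     (\<forall>I J (g::'i \<Rightarrow> 'i). I \<in> FF \<and> bij_betw g I J \<longrightarrow> J \<in> FF)
   \<and> (\<exists>I\<in>FF. \<exists>g::nat \<Rightarrow> 'i. bij_betw g UNIV I)
   \<and> (\<forall>k::nat. \<exists>I\<in>FF. \<exists>g::nat \<Rightarrow> 'i. bij_betw g {..<k} I)
   \<and> (\<forall>I\<in>FF. \<forall>xs. set xs \<subseteq> I \<longrightarrow> (\<exists>J\<in>FF. \<exists>g::'i \<Rightarrow> 'i. bij_betw g (set xs) J))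
   \<and> (\<forall>I\<in>FF. \<exists>J\<in>FF. \<exists>g::'i list \<Rightarrow> 'i. bij_betw g {xs. set xs \<subseteq> I} J)
   \<and> (\<forall>I\<in>FF. \<forall>J. (\<forall>i\<in>I. J i \<in> FF) \<longrightarrow>
        (\<exists>K\<in>FF. \<exists>g::'i \<times> 'i \<Rightarrow> 'i. bij_betw g (Sigma I J) K))"

end

theory Submission
  imports Defs "HOL-Library.Multiset"
begin

definition ch :: "'i pord set \<Rightarrow> 'i pord set" where
  "ch S = {sub b i | b i. b \<in> S \<and> i \<in> idx b}"

primrec le' :: "'i pord \<Rightarrow> 'i pord set \<Rightarrow> bool" where
  "le' OZero S = True"
| "le' (OS I f) S = (\<forall>i\<in>I. \<exists>T. finite T \<and> T \<noteq> {} \<and> T \<subseteq> ch S \<and> le' (f i) T)"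

definition lt' :: "'i pord \<Rightarrow> 'i pord set \<Rightarrow> bool" where
  "lt' a S = (\<exists>T. finite T \<and> T \<noteq> {} \<and> T \<subseteq> ch S \<and> le' a T)"

lemma le'_OS: "le' (OS I f) S = (\<forall>i\<in>I. lt' (f i) S)"
  by (simp add: lt'_def)

declare le'.simps(2)[simp del] le'_OS[simp]

lemma set_concat_map2:
  "length Fs = length bs \<Longrightarrow>
   set (concat (map2 (\<lambda>b F. map (sub b) F) bs Fs)) =
   {sub (bs!j) i | j i. j < length bs \<and> i \<in> set (Fs!j)}"
  by (auto simp: set_zip)

lemma LV:
  assumes IH: "\<And>cs. P cs \<longleftrightarrow> Q (set cs)"
  shows "lt_via P bs \<longleftrightarrow> (\<exists>T. finite T \<and> T \<noteq> {} \<and> T \<subseteq> ch (set bs) \<and> Q T)"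
proof
  assume "lt_via P bs"
  then obtain Fs where l: "length Fs = length bs"
    and s: "\<forall>j<length bs. set (Fs ! j) \<subseteq> idx (bs ! j)"
    and ne: "\<exists>j<length bs. Fs ! j \<noteq> []"
    and p: "P (concat (map2 (\<lambda>b F. map (sub b) F) bs Fs))"
    unfolding lt_via_def by blast
  let ?T = "set (concat (map2 (\<lambda>b F. map (sub b) F) bs Fs))"
  have "?T \<noteq> {}"
  proof -
    obtain j where j: "j < length bs" "Fs ! j \<noteq> []" using ne by blast
    then obtain i where "i \<in> set (Fs!j)" by (meson list.set_sel(1))
    then have "sub (bs!j) i \<in> ?T" using j by (subst set_concat_map2[OF l]) blast
    then show ?thesis by (metis empty_iff)
  qed
  moreover have "?T \<subseteq> ch (set bs)" unfolding set_concat_map2[OF l] using s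
    by (auto simp: ch_def) (metis nth_mem subsetD)
  ultimately show "\<exists>T. finite T \<and> T \<noteq> {} \<and> T \<subseteq> ch (set bs) \<and> Q T"
    using p IH by blast
next
  assume "\<exists>T. finite T \<and> T \<noteq> {} \<and> T \<subseteq> ch (set bs) \<and> Q T"
  then obtain T where fT: "finite T" and neT: "T \<noteq> {}" and sT: "T \<subseteq> ch (set bs)"
    and q: "Q T" by blast
  have "\<forall>x\<in>T. \<exists>j. j < length bs \<and> (\<exists>i. i \<in> idx (bs!j) \<and> x = sub (bs!j) i)"
    using sT unfolding ch_def in_set_conv_nth by blast
  then obtain J Ix where JI: "\<And>x. x \<in> T \<Longrightarrow> J x < length bs \<and> Ix x \<in> idx (bs!J x)
      \<and> x = sub (bs!J x) (Ix x)" by metis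
  obtain xs where xs: "set xs = T" using finite_list[OF fT] by blast
  define Fs where "Fs = map (\<lambda>j. map Ix (filter (\<lambda>x. J x = j) xs)) [0..<length bs]"
  have l: "length Fs = length bs" by (simp add: Fs_def)
  have Fsj: "\<And>j. j < length bs \<Longrightarrow> set (Fs!j) = Ix ` {x \<in> T. J x = j}"
    by (auto simp: Fs_def xs)
  have s: "\<forall>j<length bs. set (Fs ! j) \<subseteq> idx (bs ! j)" using Fsj JI by auto
  obtain x0 where x0: "x0 \<in> T" using neT by blast
  have ne: "\<exists>j<length bs. Fs ! j \<noteq> []"
    using JI[OF x0] Fsj[of "J x0"] x0 by (intro exI[of _ "J x0"]) auto
  have "set (concat (map2 (\<lambda>b F. map (sub b) F) bs Fs)) = T"
  proof -
    have "{sub (bs!j) i | j i. j < length bs \<and> i \<in> set (Fs!j)} = T"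
    proof safe
      fix j i assume "j < length bs" "i \<in> set (Fs!j)"
      then obtain x where "x \<in> T" "J x = j" "i = Ix x" using Fsj by auto
      then show "sub (bs!j) i \<in> T" using JI by metis
    next
      fix x assume x: "x \<in> T"
      then show "\<exists>j i. x = sub (bs!j) i \<and> j < length bs \<and> i \<in> set (Fs!j)"
        using JI[OF x] Fsj[of "J x"] by blast
    qed
    then show ?thesis unfolding set_concat_map2[OF l] .
  qed
  then have "P (concat (map2 (\<lambda>b F. map (sub b) F) bs Fs))" using IH q by simp
  then show "lt_via P bs" unfolding lt_via_def using l s ne by blast
qed

lemma le_equiv: "ord_le a bs \<longleftrightarrow> le' a (set bs)"
proof (induction a arbitrary: bs)
  case OZero then show ?case by simp
next
  case (OS I f)
  have "\<And>i bs. i \<in> range f \<Longrightarrow> True" by simp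
  show ?case
    apply (simp add: lt'_def)
    apply (rule ball_cong[OF refl])
    apply (rule LV)
    using OS by auto
qed

lemma lt_equiv: "ord_lt a bs \<longleftrightarrow> lt' a (set bs)"
  unfolding ord_lt_def lt'_def by (rule LV) (rule le_equiv)

lemma le'_mono: "le' a S \<Longrightarrow> S \<subseteq> S' \<Longrightarrow> le' a S'"
proof (cases a)
  case (OS I f)
  assume "le' a S" "S \<subseteq> S'"
  moreover have "ch S \<subseteq> ch S'" using \<open>S \<subseteq> S'\<close> by (auto simp: ch_def)
  ultimately show ?thesis using OS by (auto simp: lt'_def) (meson order_trans)
qed simp

lemma le'_trans: "le' a S \<Longrightarrow> (\<forall>b\<in>S. le' b U) \<Longrightarrow> le' a U"
proof (induction a arbitrary: S U)
  case OZero then show ?case by simp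
next
  case (OS I f)
  show ?case unfolding le'_OS
  proof
    fix i assume i: "i \<in> I"
    then obtain T where T: "finite T" "T \<noteq> {}" "T \<subseteq> ch S" "le' (f i) T"
      using OS.prems(1) by (auto simp: lt'_def)
    have "\<forall>t\<in>T. lt' t U"
    proof
      fix t assume "t \<in> T"
      then obtain b k where "b \<in> S" "k \<in> idx b" "t = sub b k" using T(3) by (auto simp: ch_def)
      then show "lt' t U" using OS.prems(2)
        by (cases b) (auto simp: le'_OS)
    qed
    then obtain V where V: "\<And>t. t \<in> T \<Longrightarrow> finite (V t) \<and> V t \<noteq> {} \<and> V t \<subseteq> ch U \<and> le' t (V t)"
      unfolding lt'_def by metis
    let ?W = "\<Union>t\<in>T. V t"
    have W: "finite ?W" "?W \<noteq> {}" "?W \<subseteq> ch U" using V T by auto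
    have "\<forall>t\<in>T. le' t ?W" using V le'_mono by (metis UN_upper)
    then have "le' (f i) ?W" using OS.IH[of "f i" T ?W] T(4) by simp
    then show "lt' (f i) U" unfolding lt'_def using W by blast
  qed
qed

definition chr :: "('i pord \<times> 'i pord) set" where
  "chr = {(f i, OS I f) | I f i. i \<in> I}"

lemma wf_chr: "wf chr"
proof (rule wfUNIVI)
  fix P :: "'i pord \<Rightarrow> bool" and x
  assume H: "\<forall>x. (\<forall>y. (y, x) \<in> chr \<longrightarrow> P y) \<longrightarrow> P x"
  show "P x"
  proof (induction x)
    case OZero then show ?case using H by (auto simp: chr_def)
  next
    case (OS I f) then show ?case using H[rule_format, of "OS I f"] by (auto simp: chr_def)
  qed
qed

lemma no_self_below:
  "finite U \<Longrightarrow> U \<noteq> {} \<Longrightarrow> (\<forall>u\<in>U. lt' u U) \<Longrightarrow> False"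
proof (induction "mset_set U" arbitrary: U rule: wf_induct[OF wf_mult[OF wf_chr]])
  case (1 U)
  then obtain V where V: "\<And>u. u \<in> U \<Longrightarrow> finite (V u) \<and> V u \<noteq> {} \<and> V u \<subseteq> ch U \<and> le' u (V u)"
    unfolding lt'_def by metis
  let ?W = "\<Union>u\<in>U. V u"
  have W: "finite ?W" "?W \<noteq> {}" "?W \<subseteq> ch U" using V 1 by auto
  have leW: "\<forall>u\<in>U. le' u ?W" using V le'_mono by (metis UN_upper)
  have "\<forall>w\<in>?W. lt' w ?W"
  proof
    fix w assume "w \<in> ?W"
    then obtain b k where "b \<in> U" "k \<in> idx b" "w = sub b k" using W(3) by (auto simp: ch_def)
    then show "lt' w ?W" using leW by (cases b) (auto simp: le'_OS)
  qed
  moreover have "(mset_set ?W, mset_set U) \<in> mult chr"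
  proof -
    have "({#} + mset_set ?W, {#} + mset_set U) \<in> mult chr"
    proof (rule one_step_implies_mult)
      show "mset_set U \<noteq> {#}" using 1 by (simp add: mset_set_empty_iff)
      show "\<forall>k\<in>#mset_set ?W. \<exists>j\<in>#mset_set U. (k, j) \<in> chr"
      proof
        fix k assume "k \<in># mset_set ?W"
        then have "k \<in> ?W" using W(1) by simp
        then obtain b i where "b \<in> U" "i \<in> idx b" "k = sub b i" using W(3) by (auto simp: ch_def)
        then show "\<exists>j\<in>#mset_set U. (k, j) \<in> chr" using 1(2)
          by (cases b) (auto simp: chr_def intro!: bexI[of _ b])
      qed
    qed
    then show ?thesis by simp
  qed
  ultimately show False using 1(1) W by blast
qed

lemma main_i: "le' b {a} \<Longrightarrow> lt' a {b} \<Longrightarrow> False"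
proof -
  assume ba: "le' b {a}" and ab: "lt' a {b}"
  then obtain T where T: "finite T" "T \<noteq> {}" "T \<subseteq> ch {b}" "le' a T" unfolding lt'_def by blast
  have "\<forall>t\<in>T. lt' t {a}"
  proof
    fix t assume "t \<in> T"
    then obtain k where "k \<in> idx b" "t = sub b k" using T(3) by (auto simp: ch_def)
    then show "lt' t {a}" using ba by (cases b) (auto simp: le'_OS)
  qed
  then obtain V where V: "\<And>t. t \<in> T \<Longrightarrow> finite (V t) \<and> V t \<noteq> {} \<and> V t \<subseteq> ch {a} \<and> le' t (V t)"
    unfolding lt'_def by metis
  let ?W = "\<Union>t\<in>T. V t"
  have W: "finite ?W" "?W \<noteq> {}" "?W \<subseteq> ch {a}" using V T by auto
  have "\<forall>t\<in>T. le' t ?W" using V le'_mono by (metis UN_upper)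
  then have "le' a ?W" using le'_trans T(4) by blast
  then have "lt' a {a}" unfolding lt'_def using W by blast
  then show False using no_self_below[of "{a}"] by simp
qed

lemma lt'_le': "lt' x S \<Longrightarrow> le' x S"
proof (induction x arbitrary: S)
  case OZero then show ?case by simp
next
  case (OS I f)
  then obtain T where T: "finite T" "T \<noteq> {}" "T \<subseteq> ch S" "le' (OS I f) T" unfolding lt'_def by blast
  show ?case unfolding le'_OS
  proof
    fix i assume "i \<in> I"
    then have "lt' (f i) T" using T(4) by (simp add: le'_OS)
    then have "le' (f i) T" using OS.IH by simp
    then show "lt' (f i) S" unfolding lt'_def using T by blast
  qed
qed

lemma le'_refl: "le' a {a}"
proof (induction a)
  case OZero then show ?case by simp
next
  case (OS I f)
  show ?case unfolding le'_OS
  proof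
    fix i assume "i \<in> I"
    then have "{f i} \<subseteq> ch {OS I f}" by (force simp: ch_def)
    then show "lt' (f i) {OS I f}" unfolding lt'_def using OS.IH[of "f i"] by blast
  qed
qed

lemma lt'_succ: "le' a {b} \<Longrightarrow> lt' a {osucc b}"
  unfolding lt'_def osucc_def by (intro exI[of _ "{b}"]) (auto simp: ch_def)

lemma le'_succ: "le' a {b} \<Longrightarrow> le' a {osucc b}"
  using lt'_succ lt'_le' by blast

lemma le'_pow: "le' a {(osucc ^^ k) a}"
  by (induction k) (auto simp: le'_refl intro: le'_succ)

lemma le'_pow2: "m \<le> n \<Longrightarrow> le' ((osucc ^^ m) a) {(osucc ^^ n) a}"
proof -
  assume "m \<le> n"
  then obtain k where "n = k + m" by (metis add.commute le_add_diff_inverse)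
  then show ?thesis using le'_pow[of "(osucc ^^ m) a" k] by (simp add: funpow_add)
qed

lemma lt'_pow2: "m < n \<Longrightarrow> lt' ((osucc ^^ m) a) {(osucc ^^ n) a}"
proof -
  assume "m < n"
  then obtain k where "n = Suc k" "m \<le> k" by (cases n) auto
  then show ?thesis using lt'_succ[OF le'_pow2] by simp
qed

lemma onum_pow: "onum n = (osucc ^^ n) OZero"
  by (induction n) auto

theorem theorem4p9:
  fixes FF :: "'i set set"
  assumes "index_family FF"
  shows "(\<forall>a b. in_ord FF a \<and> in_ord FF b \<longrightarrow> \<not> (ord_le b [a] \<and> ord_lt a [b]))
       \<and> (\<forall>m n :: nat. m < n \<longleftrightarrow> ord_lt (onum m :: 'i pord) [onum n])
       \<and> (\<forall>m n :: nat. ord_eq (onum m :: 'i pord) (onum n) \<longrightarrow> m = n)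
       \<and> (\<forall>a m n. in_ord FF a \<and> m < n \<longrightarrow> \<not> ord_eq ((osucc ^^ n) a) ((osucc ^^ m) a))"
proof (intro conjI allI impI)
  fix a b :: "'i pord"
  show "\<not> (ord_le b [a] \<and> ord_lt a [b])"
    using main_i by (auto simp: le_equiv lt_equiv)
next
  fix m n :: nat
  show "m < n \<longleftrightarrow> ord_lt (onum m :: 'i pord) [onum n]"
  proof
    assume "m < n" then show "ord_lt (onum m :: 'i pord) [onum n]"
      by (simp add: lt_equiv onum_pow lt'_pow2)
  next
    assume h: "ord_lt (onum m :: 'i pord) [onum n]"
    show "m < n"
    proof (rule ccontr)
      assume "\<not> m < n"
      then have "le' (onum n :: 'i pord) {onum m}" by (simp add: onum_pow le'_pow2)
      then show False using h main_i by (auto simp: lt_equiv)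
    qed
  qed
next
  fix m n :: nat
  assume h: "ord_eq (onum m :: 'i pord) (onum n)"
  show "m = n"
  proof (rule ccontr)
    assume "m \<noteq> n"
    then consider "m < n" | "n < m" by linarith
    then show False
    proof cases
      case 1
      then have "lt' (onum m :: 'i pord) {onum n}" by (simp add: onum_pow lt'_pow2)
      then show False using h main_i by (auto simp: ord_eq_def le_equiv)
    next
      case 2
      then have "lt' (onum n :: 'i pord) {onum m}" by (simp add: onum_pow lt'_pow2)
      then show False using h main_i by (auto simp: ord_eq_def le_equiv)
    qed
  qed
next
  fix a :: "'i pord" and m n :: nat
  assume "in_ord FF a \<and> m < n"
  then have "lt' ((osucc ^^ m) a) {(osucc ^^ n) a}" by (simp add: lt'_pow2)
  then show "\<not> ord_eq ((osucc ^^ n) a) ((osucc ^^ m) a)"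
    using main_i by (auto simp: ord_eq_def le_equiv)
qed

end
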